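(* Let $n$ be the number of validators and $f\in[0,n]$, and allow checkpoints to be finalized also via acknowledgment messages. If two conflicting chains are finalized according to any two respective views, then at least $\frac{n}{3}$ validators can be detected (from the messages in those views) to have violated either $\mathbf{E_1}$, $\mathbf{E_2}$, or $\mathbf{E_3}$.
   Context: Chains are identified with their last block (a block is $(b,p)$ with $p$ its slot, genesis $B_{\text{genesis}}$ has slot $-1$); $\chi.p$ is the slot of the last block; $\preceq$ is the prefix relation; chains conflict if neither is a prefix of the other. A view is a set of messages. Checkpoints $\mathcal{C}=(\chi,c)$. An FFG-vote $\mathcal{C}_1\to\mathcal{C}_2$ (carried in VOTE messages) is valid iff $\mathcal{C}_1.c<\mathcal{C}_2.c$ and $\mathcal{C}_1.\chi\preceq\mathcal{C}_2.\chi$. In a view $\mathcal{V}$: $\mathcal{C}$ is justified iff $\mathcal{C}=(B_{\text{genesis}},0)$ or there are VOTE messages in $\mathcal{V}$ from at least $\frac{2}{3}n$ distinct validators with valid FFG-votes $\mathcal{S}\to\mathcal{T}$, $\mathcal{S}$ justified in $\mathcal{V}$, $\mathcal{S}.\chi\preceq\mathcal{C}.\chi\preceq\mathcal{T}.\chi$, $\mathcal{T}.c=\mathcal{C}.c$. $\mathcal{C}$ is finalized iff (i) $\mathcal{C}=(B_{\text{genesis}},0)$, or (ii) $\mathcal{C}$ is justified and there are VOTE messages from at least $\frac{2}{3}n$ distinct validators with valid FFG-votes $\mathcal{C}\to\mathcal{T}$, $\mathcal{T}.c=\mathcal{C}.c+1$, or (iii) (finalization via acknowledgments) $\mathcal{C}$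 is justified and $\mathcal{V}$ contains acknowledgment messages $[\textsc{ack},\mathcal{C},t,v_i]$ (where $\mathcal{C}.c=t$) from at least $\frac{2}{3}n$ distinct validators. A chain is finalized according to $\mathcal{V}$ iff it is a prefix of the chain of a checkpoint finalized in $\mathcal{V}$. Preorder: $\mathcal{C}\le\mathcal{C}'$ iff $\mathcal{C}.c<\mathcal{C}'.c$ or ($\mathcal{C}.c=\mathcal{C}'.c$ and $\mathcal{C}.\chi.p\le\mathcal{C}'.\chi.p$); $<$ its strict part. Slashing conditions: for two distinct FFG-votes $\mathcal{C}_1\to\mathcal{C}_2$, $\mathcal{C}_3\to\mathcal{C}_4$ sent by the same validator, $\mathbf{E_1}$: $\mathcal{C}_2.c=\mathcal{C}_4.c$; $\mathbf{E_2}$: $\mathcal{C}_3<\mathcal{C}_1$ and $\mathcal{C}_2.c<\mathcal{C}_4.c$. $\mathbf{E_3}$: a validator has sent an FFG-vote $\mathcal{C}_1\to\mathcal{C}_2$ and an acknowledgment for $\mathcal{C}_a$ with $\mathcal{C}_1<\mathcal{C}_a$ and $\mathcal{C}_a.c<\mathcal{C}_2.c$. *)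

theory Defs
  imports Complex_Main "HOL-Library.Sublist" "HOL-Library.Cardinality"
begin

text \<open>A block is a pair (b, p) with content b and slot p. A chain is identified
with its last block; we represent it by the list of its blocks after the genesis
block (which is implicit, has slot -1, and corresponds to the empty list).\<close>

typedef 'b chain = "{xs :: ('b \<times> nat) list. sorted_wrt (\<lambda>a b. snd a < snd b) xs}"
  by (rule exI[of _ "[]"]) simp

definition genesis :: "'b chain" where
  "genesis = Abs_chain []"

definition slot :: "'b chain \<Rightarrow> int" where
  "slot ch = (if Rep_chain ch = [] then -1 else int (snd (last (Rep_chain ch))))"

definition chain_prefix :: "'b chain \<Rightarrow> 'b chain \<Rightarrow> bool" where
  "chain_prefix a b \<longleftrightarrow> prefix (Rep_chain a) (Rep_chain b)"

definition conflicting :: "'b chain \<Rightarrow> 'b chain \<Rightarrow> bool" where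
  "conflicting a b \<longleftrightarrow> \<not> chain_prefix a b \<and> \<not> chain_prefix b a"

type_synonym 'b checkpoint = "'b chain \<times> nat"

abbreviation cp_chain :: "'b checkpoint \<Rightarrow> 'b chain" where "cp_chain C \<equiv> fst C"
abbreviation cp_epoch :: "'b checkpoint \<Rightarrow> nat" where "cp_epoch C \<equiv> snd C"

definition genesis_cp :: "'b checkpoint" where
  "genesis_cp = (genesis, 0)"

datatype ('v, 'b) msg =
    Vote 'v "'b checkpoint" "'b checkpoint"
  | Ack 'v "'b checkpoint" nat

type_synonym ('v, 'b) view = "('v, 'b) msg set"

definition valid_ffg :: "'b checkpoint \<Rightarrow> 'b checkpoint \<Rightarrow> bool" where
  "valid_ffg S T \<longleftrightarrow> cp_epoch S < cp_epoch T \<and> chain_prefix (cp_chain S) (cp_chain T)"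

text \<open>Validators are the elements of the finite type 'v; n = CARD('v).
"At least 2/3 n" is written 3 * card W \<ge> 2 * n.\<close>

inductive justified :: "('v::finite, 'b) view \<Rightarrow> 'b checkpoint \<Rightarrow> bool"
  for V :: "('v, 'b) view" where
  just_genesis: "justified V genesis_cp"
| just_votes: "\<lbrakk> 3 * card W \<ge> 2 * CARD('v);
     \<forall>v\<in>W. \<exists>S T. Vote v S T \<in> V \<and> valid_ffg S T \<and> justified V S
        \<and> chain_prefix (cp_chain S) (cp_chain C) \<and> chain_prefix (cp_chain C) (cp_chain T)
        \<and> cp_epoch T = cp_epoch C \<rbrakk> \<Longrightarrow> justified V C"

definition finalized :: "('v::finite, 'b) view \<Rightarrow> 'b checkpoint \<Rightarrow> bool" where
  "finalized V C \<longleftrightarrow>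
     C = genesis_cp
   \<or> (justified V C \<and> (\<exists>W. 3 * card W \<ge> 2 * CARD('v) \<and>
        (\<forall>v\<in>W. \<exists>T. Vote v C T \<in> V \<and> valid_ffg C T \<and> cp_epoch T = cp_epoch C + 1)))
   \<or> (justified V C \<and> (\<exists>W. 3 * card W \<ge> 2 * CARD('v) \<and>
        (\<forall>v\<in>W. Ack v C (cp_epoch C) \<in> V)))"

definition chain_finalized :: "('v::finite, 'b) view \<Rightarrow> 'b chain \<Rightarrow> bool" where
  "chain_finalized V ch \<longleftrightarrow> (\<exists>C. finalized V C \<and> chain_prefix ch (cp_chain C))"

definition cp_le :: "'b checkpoint \<Rightarrow> 'b checkpoint \<Rightarrow> bool" where
  "cp_le C C' \<longleftrightarrow> cp_epoch C < cp_epoch C'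
     \<or> (cp_epoch C = cp_epoch C' \<and> slot (cp_chain C) \<le> slot (cp_chain C'))"

definition cp_less :: "'b checkpoint \<Rightarrow> 'b checkpoint \<Rightarrow> bool" where
  "cp_less C C' \<longleftrightarrow> cp_le C C' \<and> \<not> cp_le C' C"

definition violates_E1 :: "('v, 'b) view \<Rightarrow> 'v \<Rightarrow> bool" where
  "violates_E1 M v \<longleftrightarrow> (\<exists>C1 C2 C3 C4. Vote v C1 C2 \<in> M \<and> Vote v C3 C4 \<in> M
     \<and> (C1, C2) \<noteq> (C3, C4) \<and> cp_epoch C2 = cp_epoch C4)"

definition violates_E2 :: "('v, 'b) view \<Rightarrow> 'v \<Rightarrow> bool" where
  "violates_E2 M v \<longleftrightarrow> (\<exists>C1 C2 C3 C4. Vote v C1 C2 \<in> M \<and> Vote v C3 C4 \<in> M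
     \<and> (C1, C2) \<noteq> (C3, C4) \<and> cp_less C3 C1 \<and> cp_epoch C2 < cp_epoch C4)"

definition violates_E3 :: "('v, 'b) view \<Rightarrow> 'v \<Rightarrow> bool" where
  "violates_E3 M v \<longleftrightarrow> (\<exists>C1 C2 Ca t. Vote v C1 C2 \<in> M \<and> Ack v Ca t \<in> M
     \<and> cp_epoch Ca = t \<and> cp_less C1 Ca \<and> cp_epoch Ca < cp_epoch C2)"

definition slashable :: "('v, 'b) view \<Rightarrow> 'v \<Rightarrow> bool" where
  "slashable M v \<longleftrightarrow> violates_E1 M v \<or> violates_E2 M v \<or> violates_E3 M v"

end

theory Submission
  imports Defs
begin

lemma rep_genesis: "Rep_chain genesis = []"
  unfolding genesis_def by (simp add: Abs_chain_inverse)

lemma prefix_genesis: "chain_prefix genesis x"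
  by (simp add: chain_prefix_def rep_genesis)

lemma chain_prefix_trans: "chain_prefix a b \<Longrightarrow> chain_prefix b c \<Longrightarrow> chain_prefix a c"
  unfolding chain_prefix_def by (metis prefix_order.order_trans)

lemma conflicting_mono:
  assumes "chain_prefix a A" "chain_prefix b B" "conflicting a b"
  shows "conflicting A B"
  using assms unfolding conflicting_def chain_prefix_def
  by (meson prefix_order.order_trans prefix_same_cases)

lemma card_inter:
  fixes W1 W2 :: "'v::finite set"
  assumes "3*card W1 \<ge> 2*CARD('v)" "3*card W2 \<ge> 2*CARD('v)"
  shows "3*card (W1\<inter>W2) \<ge> CARD('v)"
proof -
  have "card W1 + card W2 = card (W1\<union>W2) + card (W1\<inter>W2)" by (rule card_Un_Int) auto
  moreover have "card (W1\<union>W2) \<le> CARD('v)" by (rule card_mono) auto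
  ultimately show ?thesis using assms by linarith
qed

lemma slot_prefix:
  assumes "chain_prefix a b" "slot b \<le> slot a"
  shows "a = b"
proof -
  obtain zs where b: "Rep_chain b = Rep_chain a @ zs"
    using assms(1) unfolding chain_prefix_def prefix_def by auto
  have s: "sorted_wrt (\<lambda>a b. snd a < snd b) (Rep_chain b)" using Rep_chain by auto
  show ?thesis
  proof (cases "zs = []")
    case True then show ?thesis using b by (metis Rep_chain_inject append_Nil2)
  next
    case False
    then have lb: "last (Rep_chain b) = last zs" using b by simp
    have "slot a < slot b"
    proof (cases "Rep_chain a = []")
      case True then show ?thesis using False b lb unfolding slot_def by simp
    next
      case F2: False
      have "snd (last (Rep_chain a)) < snd (last zs)"
        using s b F2 False by (simp add: sorted_wrt_append last_in_set)
      then show ?thesis using F2 False b unfolding slot_def by simp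
    qed
    then show ?thesis using assms(2) by simp
  qed
qed

lemma just_votes_inv:
  fixes V :: "('v::finite,'b) view"
  assumes "justified V C" "C \<noteq> genesis_cp"
  shows "\<exists>W. 3 * card W \<ge> 2 * CARD('v::finite) \<and>
     (\<forall>v\<in>W. \<exists>S T. Vote v S T \<in> V \<and> valid_ffg S T \<and> justified V S
        \<and> chain_prefix (cp_chain S) (cp_chain C) \<and> chain_prefix (cp_chain C) (cp_chain T)
        \<and> cp_epoch T = cp_epoch C)"
  using assms by (cases rule: justified.cases) auto

lemma same_epoch:
  fixes V1 V2 :: "('v::finite,'b) view"
  assumes "justified V1 A" "justified V2 B" "cp_epoch A = cp_epoch B"
    "conflicting (cp_chain A) (cp_chain B)"
  shows "\<exists>W::'v set. 3*card W \<ge> CARD('v) \<and> (\<forall>v\<in>W. slashable (V1\<union>V2) v)"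
proof -
  have "A \<noteq> genesis_cp" using assms(4) by (auto simp: genesis_cp_def conflicting_def prefix_genesis)
  then obtain W1 where W1: "3*card W1 \<ge> 2*CARD('v)" "\<forall>v\<in>W1. \<exists>S T. Vote v S T \<in> V1 \<and> valid_ffg S T \<and> justified V1 S
        \<and> chain_prefix (cp_chain S) (cp_chain A) \<and> chain_prefix (cp_chain A) (cp_chain T)
        \<and> cp_epoch T = cp_epoch A"
    using just_votes_inv assms(1) by blast
  have "B \<noteq> genesis_cp" using assms(4) by (auto simp: genesis_cp_def conflicting_def prefix_genesis)
  then obtain W2 where W2: "3*card W2 \<ge> 2*CARD('v)" "\<forall>v\<in>W2. \<exists>S T. Vote v S T \<in> V2 \<and> valid_ffg S T \<and> justified V2 S
        \<and> chain_prefix (cp_chain S) (cp_chain B) \<and> chain_prefix (cp_chain B) (cp_chain T)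
        \<and> cp_epoch T = cp_epoch B"
    using just_votes_inv assms(2) by blast
  have "\<forall>v\<in>W1\<inter>W2. slashable (V1\<union>V2) v"
  proof
    fix v assume "v \<in> W1\<inter>W2"
    then obtain S1 T1 S2 T2 where h: "Vote v S1 T1 \<in> V1" "chain_prefix (cp_chain A) (cp_chain T1)"
      "cp_epoch T1 = cp_epoch A" "Vote v S2 T2 \<in> V2" "chain_prefix (cp_chain B) (cp_chain T2)"
      "cp_epoch T2 = cp_epoch B"
      using W1(2) W2(2) by blast
    have "(S1,T1) \<noteq> (S2,T2)"
    proof
      assume "(S1,T1) = (S2,T2)"
      then have "T1 = T2" by simp
      then show False using assms(4) h
        by (auto simp: conflicting_def chain_prefix_def dest: prefix_same_cases)
    qed
    then have "violates_E1 (V1\<union>V2) v" unfolding violates_E1_def using h assms(3)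
      by (intro exI[of _ S1] exI[of _ T1] exI[of _ S2] exI[of _ T2]) auto
    then show "slashable (V1\<union>V2) v" by (simp add: slashable_def)
  qed
  then show ?thesis using card_inter[OF W1(1) W2(1)] by blast
qed

lemma key:
  fixes V1 V2 :: "('v::finite,'b) view" and Cf :: "'b checkpoint"
  assumes jf: "justified V1 Cf"
    and fin: "(\<exists>W. 3 * card W \<ge> 2 * CARD('v) \<and>
        (\<forall>v\<in>W. \<exists>T. Vote v Cf T \<in> V1 \<and> valid_ffg Cf T \<and> cp_epoch T = cp_epoch Cf + 1))
      \<or> (\<exists>W. 3 * card W \<ge> 2 * CARD('v) \<and> (\<forall>v\<in>W. Ack v Cf (cp_epoch Cf) \<in> V1))"
  shows "justified V2 J \<Longrightarrow> cp_epoch Cf < cp_epoch J \<Longrightarrow> \<not> chain_prefix (cp_chain Cf) (cp_chain J)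
    \<Longrightarrow> \<exists>W::'v set. 3*card W \<ge> CARD('v) \<and> (\<forall>v\<in>W. slashable (V1\<union>V2) v)"
proof (induction "cp_epoch J" arbitrary: J rule: less_induct)
  case less
  have "J \<noteq> genesis_cp" using less.prems(2) by (auto simp: genesis_cp_def)
  then obtain WJ where WJ: "3*card WJ \<ge> 2*CARD('v)" "\<forall>v\<in>WJ. \<exists>S T. Vote v S T \<in> V2 \<and> valid_ffg S T \<and> justified V2 S
        \<and> chain_prefix (cp_chain S) (cp_chain J) \<and> chain_prefix (cp_chain J) (cp_chain T)
        \<and> cp_epoch T = cp_epoch J"
    using just_votes_inv less.prems(1) by blast
  obtain Wf where Wf: "3*card Wf \<ge> 2*CARD('v)" and
    sc: "\<And>v S T. v \<in> Wf \<Longrightarrow> Vote v S T \<in> V2 \<Longrightarrow> cp_less S Cf \<Longrightarrow> cp_epoch Cf < cp_epoch T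
       \<Longrightarrow> slashable (V1\<union>V2) v"
  proof -
    from fin show ?thesis
    proof
      assume "\<exists>W. 3 * card W \<ge> 2 * CARD('v) \<and>
        (\<forall>v\<in>W. \<exists>T. Vote v Cf T \<in> V1 \<and> valid_ffg Cf T \<and> cp_epoch T = cp_epoch Cf + 1)"
      then obtain W where W: "3 * card W \<ge> 2 * CARD('v)"
        "\<forall>v\<in>W. \<exists>T. Vote v Cf T \<in> V1 \<and> valid_ffg Cf T \<and> cp_epoch T = cp_epoch Cf + 1" by blast
      show ?thesis
      proof (rule that[OF W(1)])
        fix v S T assume a: "v \<in> W" "Vote v S T \<in> V2" "cp_less S Cf" "cp_epoch Cf < cp_epoch T"
        obtain Tf where tf: "Vote v Cf Tf \<in> V1" "cp_epoch Tf = cp_epoch Cf + 1" using W(2) a(1) by blast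
        have ne: "(Cf, Tf) \<noteq> (S, T)" using a(3) by (auto simp: cp_less_def)
        show "slashable (V1\<union>V2) v"
        proof (cases "cp_epoch T = cp_epoch Cf + 1")
          case True
          then have "violates_E1 (V1\<union>V2) v" unfolding violates_E1_def
            using tf a ne by (intro exI[of _ Cf] exI[of _ Tf] exI[of _ S] exI[of _ T]) auto
          then show ?thesis by (simp add: slashable_def)
        next
          case False
          then have "violates_E2 (V1\<union>V2) v" unfolding violates_E2_def
            using tf a ne by (intro exI[of _ Cf] exI[of _ Tf] exI[of _ S] exI[of _ T]) auto
          then show ?thesis by (simp add: slashable_def)
        qed
      qed
    next
      assume "\<exists>W. 3 * card W \<ge> 2 * CARD('v) \<and> (\<forall>v\<in>W. Ack v Cf (cp_epoch Cf) \<in> V1)"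
      then obtain W where W: "3 * card W \<ge> 2 * CARD('v)" "\<forall>v\<in>W. Ack v Cf (cp_epoch Cf) \<in> V1" by blast
      show ?thesis
      proof (rule that[OF W(1)])
        fix v S T assume a: "v \<in> W" "Vote v S T \<in> V2" "cp_less S Cf" "cp_epoch Cf < cp_epoch T"
        have "violates_E3 (V1\<union>V2) v" unfolding violates_E3_def using W(2) a by blast
        then show "slashable (V1\<union>V2) v" by (simp add: slashable_def)
      qed
    qed
  qed
  show ?case
  proof (cases "\<exists>v\<in>WJ\<inter>Wf. \<exists>S T. Vote v S T \<in> V2 \<and> valid_ffg S T \<and> justified V2 S
        \<and> chain_prefix (cp_chain S) (cp_chain J) \<and> cp_epoch T = cp_epoch J \<and> \<not> cp_less S Cf")
    case True
    then obtain v S T where h: "Vote v S T \<in> V2" "valid_ffg S T" "justified V2 S"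
        "chain_prefix (cp_chain S) (cp_chain J)" "cp_epoch T = cp_epoch J" "\<not> cp_less S Cf" by blast
    have np: "\<not> chain_prefix (cp_chain Cf) (cp_chain S)"
      using h(4) less.prems(3) chain_prefix_trans by blast
    have lt: "cp_epoch S < cp_epoch J" using h(2,5) by (simp add: valid_ffg_def)
    show ?thesis
    proof (cases "cp_epoch Cf < cp_epoch S")
      case True
      show ?thesis by (rule less.hyps[OF lt h(3) True np])
    next
      case False
      then have eq: "cp_epoch S = cp_epoch Cf" and sl: "slot (cp_chain Cf) \<le> slot (cp_chain S)"
        using h(6) by (auto simp: cp_less_def cp_le_def)
      have "\<not> chain_prefix (cp_chain S) (cp_chain Cf)"
      proof
        assume "chain_prefix (cp_chain S) (cp_chain Cf)"
        then have "cp_chain S = cp_chain Cf" using slot_prefix sl by blast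
        then show False using np by (simp add: chain_prefix_def)
      qed
      then have "conflicting (cp_chain Cf) (cp_chain S)" using np by (simp add: conflicting_def)
      then show ?thesis using same_epoch[OF jf h(3)] eq by simp
    qed
  next
    case False
    have "\<forall>v\<in>WJ\<inter>Wf. slashable (V1\<union>V2) v"
    proof
      fix v assume v: "v \<in> WJ\<inter>Wf"
      then obtain S T where h: "Vote v S T \<in> V2" "valid_ffg S T" "justified V2 S"
        "chain_prefix (cp_chain S) (cp_chain J)" "cp_epoch T = cp_epoch J"
        using WJ(2) by blast
      then have "cp_less S Cf" using False v by blast
      then show "slashable (V1\<union>V2) v" using sc v h less.prems(2) by auto
    qed
    then show ?thesis using card_inter[OF WJ(1) Wf] by blast
  qed
qed

theorem lemmaB1:
  fixes V1 V2 :: "('v::finite, 'b) view"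
    and ch1 ch2 :: "'b chain"
    and f :: real
  assumes "0 \<le> f" and "f \<le> real CARD('v)"
    and "chain_finalized V1 ch1"
    and "chain_finalized V2 ch2"
    and "conflicting ch1 ch2"
  shows "\<exists>W :: 'v set. 3 * card W \<ge> CARD('v) \<and> (\<forall>v\<in>W. slashable (V1 \<union> V2) v)"
proof -
  obtain A where A: "finalized V1 A" "chain_prefix ch1 (cp_chain A)"
    using assms(3) by (auto simp: chain_finalized_def)
  obtain B where B: "finalized V2 B" "chain_prefix ch2 (cp_chain B)"
    using assms(4) by (auto simp: chain_finalized_def)
  have c: "conflicting (cp_chain A) (cp_chain B)" using conflicting_mono[OF A(2) B(2) assms(5)] .
  have "A \<noteq> genesis_cp" "B \<noteq> genesis_cp" using c
    by (auto simp: genesis_cp_def conflicting_def prefix_genesis)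
  then have fa: "justified V1 A \<and> ((\<exists>W. 3 * card W \<ge> 2 * CARD('v) \<and>
        (\<forall>v\<in>W. \<exists>T. Vote v A T \<in> V1 \<and> valid_ffg A T \<and> cp_epoch T = cp_epoch A + 1))
      \<or> (\<exists>W. 3 * card W \<ge> 2 * CARD('v) \<and> (\<forall>v\<in>W. Ack v A (cp_epoch A) \<in> V1)))"
    and fb: "justified V2 B \<and> ((\<exists>W. 3 * card W \<ge> 2 * CARD('v) \<and>
        (\<forall>v\<in>W. \<exists>T. Vote v B T \<in> V2 \<and> valid_ffg B T \<and> cp_epoch T = cp_epoch B + 1))
      \<or> (\<exists>W. 3 * card W \<ge> 2 * CARD('v) \<and> (\<forall>v\<in>W. Ack v B (cp_epoch B) \<in> V2)))"
    using A(1) B(1) unfolding finalized_def by blast+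
  show ?thesis
  proof (cases rule: linorder_cases[of "cp_epoch A" "cp_epoch B"])
    case less
    show ?thesis using key[of V1 A V2 B] fa fb less c by (auto simp: conflicting_def)
  next
    case equal
    show ?thesis using same_epoch[of V1 A V2 B] fa fb equal c by auto
  next
    case greater
    have "\<exists>W::'v set. 3*card W \<ge> CARD('v) \<and> (\<forall>v\<in>W. slashable (V2\<union>V1) v)"
      using key[of V2 B V1 A] fa fb greater c by (auto simp: conflicting_def)
    then show ?thesis by (simp add: Un_commute)
  qed
qed

end
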